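(* Let $c\ge1$ and define $f:\{0,1,2,\dots\}\to\mathbb{R}$ by $f(m)=(1-2^{-m})(c-m)$. Let $m^*$ be the largest integer $m$ at which $f$ attains its maximum. Then $\log_2 c-2<m^*\le\log_2 c+1$. *)

theory Defs
  imports Complex_Main
begin

definition f_lemma2 :: "real \<Rightarrow> nat \<Rightarrow> real" where
  "f_lemma2 c m = (1 - 2 powr (- real m)) * (c - real m)"

end

theory Submission
  imports Defs
begin

lemma f_alt: "f_lemma2 c m = (1 - 1/2^m) * (c - real m)"
  by (simp add: f_lemma2_def powr_minus powr_realpow divide_inverse)

lemma f_diff: "f_lemma2 c (Suc m) - f_lemma2 c m = (c - real m + 1) / 2^(Suc m) - 1"
  unfolding f_alt by (simp add: field_simps)

lemma pow_ge: "real m \<le> 2 ^ m"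
proof (induction m)
  case (Suc m)
  have "(1::real) \<le> 2^m" by simp
  have "(2::real)^Suc m = 2 * 2^m" by simp
  thus ?case using Suc \<open>1 \<le> 2^m\<close> by linarith
qed simp

theorem lemma2:
  fixes c :: real and mstar :: nat
  assumes "c \<ge> 1"
    and "\<forall>m. f_lemma2 c m \<le> f_lemma2 c mstar"
    and "\<forall>m. f_lemma2 c m = f_lemma2 c mstar \<longrightarrow> m \<le> mstar"
  shows "log 2 c - 2 < real mstar \<and> real mstar \<le> log 2 c + 1"
proof
  have "f_lemma2 c (Suc mstar) \<noteq> f_lemma2 c mstar" using assms(3) by force
  with assms(2) have "f_lemma2 c (Suc mstar) - f_lemma2 c mstar < 0"
    by (metis diff_less_0_iff_less order_le_less)
  hence "(c - real mstar + 1) / 2^(Suc mstar) < 1" unfolding f_diff by simp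
  hence "c - real mstar + 1 < 2^(Suc mstar)" by (simp add: divide_less_eq)
  moreover have "real mstar \<le> 2^mstar" by (rule pow_ge)
  moreover have "(2::real)^Suc mstar = 2 * 2^mstar" by simp
  moreover have "real mstar \<ge> 0" by simp
  ultimately have "c < 2 ^ mstar * 4" by linarith
  hence "c < 2 powr (real mstar + 2)"
    by (simp add: powr_add powr_realpow)
  hence "log 2 c < real mstar + 2" using assms(1) by (simp add: log_less_iff)
  thus "log 2 c - 2 < real mstar" by simp
next
  show "real mstar \<le> log 2 c + 1"
  proof (cases mstar)
    case 0
    thus ?thesis using assms(1) by simp
  next
    case (Suc k)
    have "f_lemma2 c (Suc k) - f_lemma2 c k \<ge> 0" using assms(2) Suc by simp
    hence "(c - real k + 1) / 2^(Suc k) \<ge> 1" unfolding f_diff by simp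
    hence "2^(Suc k) \<le> c - real k + 1" by (simp add: le_divide_eq)
    hence "2 powr (real k) \<le> c" using assms(1) by (simp add: powr_realpow)
    hence "real k \<le> log 2 c" using assms(1) by (simp add: le_log_iff)
    thus ?thesis using Suc by simp
  qed
qed

end
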